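(* Let $H=\langle a,b \mid c=[b,a],\ [c,a]=[c,b]=1\rangle$, in which every element is uniquely of the form $a^mb^nc^k$ with $m,n,k\in\mathbb{Z}$. The function $\phi\colon H\to\mathbb{R}$ defined by $\phi(a^mb^nc^k)=mn-2k$ satisfies $\phi(1)=0$ and $\phi(xy)+\phi(xy^{-1})=2\phi(x)$ for all $x,y\in H$, i.e. $\phi\in J_0(H)$.
   Context: $[x,y]=x^{-1}y^{-1}xy$. $J_0(H)$ denotes the space of functions $f\colon H\to\mathbb{R}$ with $f(xy)+f(xy^{-1})=2f(x)$ for all $x,y\in H$ and $f(1)=0$. *)

theory Defs
  imports Complex_Main "HOL-Algebra.Group"
begin

text \<open>Concrete model of the discrete Heisenberg group
  H = < a, b | c = [b,a], [c,a] = [c,b] = 1 >, with [x,y] = x^-1 y^-1 x y.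
  The triple (m,n,k) stands for the normal form a^m b^n c^k.
  From c = b^-1 a^-1 b a we get b a = a b c, hence b^n a^p = a^p b^n c^(n p), so
  (a^m b^n c^k)(a^p b^q c^l) = a^(m+p) b^(n+q) c^(k+l+n p).\<close>

definition heis :: "(int \<times> int \<times> int) monoid" where
  "heis = \<lparr> carrier = UNIV,
            mult = (\<lambda>(m, n, k) (p, q, l). (m + p, n + q, k + l + n * p)),
            one = (0, 0, 0) \<rparr>"

definition heis_a :: "int \<times> int \<times> int" where "heis_a = (1, 0, 0)"
definition heis_b :: "int \<times> int \<times> int" where "heis_b = (0, 1, 0)"
definition heis_c :: "int \<times> int \<times> int" where "heis_c = (0, 0, 1)"

definition J0 :: "('a, 'b) monoid_scheme \<Rightarrow> ('a \<Rightarrow> real) set" where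
  "J0 G = {f. (\<forall>x\<in>carrier G. \<forall>y\<in>carrier G.
                 f (x \<otimes>\<^bsub>G\<^esub> y) + f (x \<otimes>\<^bsub>G\<^esub> inv\<^bsub>G\<^esub> y) = 2 * f x)
              \<and> f \<one>\<^bsub>G\<^esub> = 0}"

definition heis_phi :: "int \<times> int \<times> int \<Rightarrow> real" where
  "heis_phi = (\<lambda>(m, n, k). real_of_int (m * n - 2 * k))"

end

theory Submission
  imports Defs
begin

lemma heis_mult: "(m,n,k) \<otimes>\<^bsub>heis\<^esub> (p,q,l) = (m + p, n + q, k + l + n * p)"
  by (simp add: heis_def)

lemma heis_group: "group heis"
proof (rule groupI)
  fix x y z assume "x \<in> carrier heis" "y \<in> carrier heis" "z \<in> carrier heis"
  show "x \<otimes>\<^bsub>heis\<^esub> y \<otimes>\<^bsub>heis\<^esub> z = x \<otimes>\<^bsub>heis\<^esub> (y \<otimes>\<^bsub>heis\<^esub> z)"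
    by (cases x; cases y; cases z) (auto simp: heis_def algebra_simps)
next
  fix x assume "x \<in> carrier heis"
  obtain m n k where x: "x = (m,n,k)" by (cases x) auto
  show "\<exists>y\<in>carrier heis. y \<otimes>\<^bsub>heis\<^esub> x = \<one>\<^bsub>heis\<^esub>"
    by (rule bexI[of _ "(-m,-n,n*m-k)"]) (auto simp: heis_def x)
qed (auto simp: heis_def)

lemma heis_inv: "inv\<^bsub>heis\<^esub> (m,n,k) = (-m,-n,n*m-k)"
  by (rule group.inv_equality[OF heis_group]) (auto simp: heis_def)

theorem lemma3p9:
  shows "group heis \<and> heis_c = inv\<^bsub>heis\<^esub> heis_b \<otimes>\<^bsub>heis\<^esub> inv\<^bsub>heis\<^esub> heis_a \<otimes>\<^bsub>heis\<^esub> heis_b \<otimes>\<^bsub>heis\<^esub> heis_a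
         \<and> heis_phi \<one>\<^bsub>heis\<^esub> = 0 \<and> heis_phi \<in> J0 heis"
proof (intro conjI)
  show "group heis" by (rule heis_group)
  show "heis_c = inv\<^bsub>heis\<^esub> heis_b \<otimes>\<^bsub>heis\<^esub> inv\<^bsub>heis\<^esub> heis_a \<otimes>\<^bsub>heis\<^esub> heis_b \<otimes>\<^bsub>heis\<^esub> heis_a"
    by (simp add: heis_a_def heis_b_def heis_c_def heis_inv heis_mult)
  show "heis_phi \<one>\<^bsub>heis\<^esub> = 0" by (simp add: heis_def heis_phi_def)
  show "heis_phi \<in> J0 heis"
    unfolding J0_def
  proof (intro CollectI conjI ballI)
    fix x y assume "x \<in> carrier heis" "y \<in> carrier heis"
    obtain m n k where x: "x = (m,n,k)" by (cases x) auto
    obtain p q l where y: "y = (p,q,l)" by (cases y) auto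
    have E: "(m + p) * (n + q) - 2 * (k + l + n * p) + ((m - p) * (n - q) - 2 * (k + (q*p - l) + n * (-p)))
          = 2 * (m * n - 2 * k)" by (simp add: algebra_simps)
    have R: "real_of_int ((m + p) * (n + q) - 2 * (k + l + n * p)) + real_of_int ((m + - p) * (n + - q) - 2 * (k + (q*p - l) + n * (-p)))
          = 2 * real_of_int (m * n - 2 * k)"
      using arg_cong[OF E, of real_of_int] by simp
    show "heis_phi (x \<otimes>\<^bsub>heis\<^esub> y) + heis_phi (x \<otimes>\<^bsub>heis\<^esub> inv\<^bsub>heis\<^esub> y) = 2 * heis_phi x"
      unfolding x y heis_inv heis_mult heis_phi_def prod.case using R by simp
  qed (simp add: heis_def heis_phi_def)
qed

end
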